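(* Let $\mathbf B$ be a partial residuated Boolean algebra and let $a,b\in B$ with $a\not\leq b$. Then there exists a prime filter $F$ of $\mathbf B$ such that $a\in F$ and $b\notin F$.
   Context: A residuated Boolean algebra is a Boolean algebra $(A,\vee,\wedge,\neg,\top,\bot,\leq)$ with a binary operation $\otimes$ having unit $1$ and operations $\backslash,/$ with $a\otimes b\leq c$ iff $b\leq a\backslash c$ iff $a\leq c/b$. A partial structure $\mathbf B=(B,\otimes,\backslash,/,\vee,\wedge,\neg,1,\top,\bot,\leq)$ has partial operations on $B$ (write $x\star y=\infty$ if undefined), constants in $B$ and a relation $\leq$. An embedding into a total residuated Boolean algebra is an injection preserving constants, commuting with operations wherever defined, and satisfying $x\leq y\iff\iota(x)\leq\iota(y)$. $\mathbf B$ is a partial residuated Boolean algebra if it embeds into some residuated Boolean algebra and for every $a\in B$, $\neg a$ is defined, $a\vee\neg a=\top$ and $a\wedge\neg a=\bot$. A prime filter of $\mathbf B$ is $F\subseteq B$, $F\neq B$, such that: $a\in F$, $a\leq b$ imply $b\in F$; $a,b\in F$ and $a\wedge b\neq\infty$ imply $a\wedge b\in F$; and $\neg a\in F$ iff $a\notin F$ for all $a\in B$. *)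

theory Defs
  imports Main
begin

record 'b rba =
  rcarrier :: "'b set"
  rmult :: "'b \<Rightarrow> 'b \<Rightarrow> 'b"
  rldiv :: "'b \<Rightarrow> 'b \<Rightarrow> 'b"
  rrdiv :: "'b \<Rightarrow> 'b \<Rightarrow> 'b"
  rjoin :: "'b \<Rightarrow> 'b \<Rightarrow> 'b"
  rmeet :: "'b \<Rightarrow> 'b \<Rightarrow> 'b"
  rneg :: "'b \<Rightarrow> 'b"
  rone :: 'b
  rtop :: 'b
  rbot :: 'b
  rle :: "'b \<Rightarrow> 'b \<Rightarrow> bool"

text \<open>A Boolean algebra (carrier, join, meet, neg, top, bot, le) with a binary operation
  mult having unit one and residuals ldiv (written a\b) and rdiv (written c/b):
  mult a b \<le> c iff b \<le> ldiv a c iff a \<le> rdiv c b.\<close>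
definition is_rba :: "'b rba \<Rightarrow> bool" where
  "is_rba A \<longleftrightarrow>
     (let C = rcarrier A; le = rle A in
      rone A \<in> C \<and> rtop A \<in> C \<and> rbot A \<in> C \<and>
      (\<forall>x\<in>C. \<forall>y\<in>C. rmult A x y \<in> C \<and> rldiv A x y \<in> C \<and> rrdiv A x y \<in> C \<and>
                     rjoin A x y \<in> C \<and> rmeet A x y \<in> C) \<and>
      (\<forall>x\<in>C. rneg A x \<in> C) \<and>
      \<comment> \<open>partial order\<close>
      (\<forall>x\<in>C. le x x) \<and>
      (\<forall>x\<in>C. \<forall>y\<in>C. le x y \<and> le y x \<longrightarrow> x = y) \<and>
      (\<forall>x\<in>C. \<forall>y\<in>C. \<forall>z\<in>C. le x y \<and> le y z \<longrightarrow> le x z) \<and>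
      \<comment> \<open>join is least upper bound, meet is greatest lower bound\<close>
      (\<forall>x\<in>C. \<forall>y\<in>C. \<forall>z\<in>C. le (rjoin A x y) z \<longleftrightarrow> le x z \<and> le y z) \<and>
      (\<forall>x\<in>C. \<forall>y\<in>C. \<forall>z\<in>C. le z (rmeet A x y) \<longleftrightarrow> le z x \<and> le z y) \<and>
      \<comment> \<open>bounds\<close>
      (\<forall>x\<in>C. le (rbot A) x \<and> le x (rtop A)) \<and>
      \<comment> \<open>distributivity\<close>
      (\<forall>x\<in>C. \<forall>y\<in>C. \<forall>z\<in>C.
          rmeet A x (rjoin A y z) = rjoin A (rmeet A x y) (rmeet A x z)) \<and>
      \<comment> \<open>complement\<close>
      (\<forall>x\<in>C. rjoin A x (rneg A x) = rtop A \<and> rmeet A x (rneg A x) = rbot A) \<and>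
      \<comment> \<open>unit\<close>
      (\<forall>x\<in>C. rmult A (rone A) x = x \<and> rmult A x (rone A) = x) \<and>
      \<comment> \<open>residuation\<close>
      (\<forall>a\<in>C. \<forall>b\<in>C. \<forall>c\<in>C.
          (le (rmult A a b) c \<longleftrightarrow> le b (rldiv A a c)) \<and>
          (le b (rldiv A a c) \<longleftrightarrow> le a (rrdiv A c b))))"

text \<open>Partial operations return None when undefined (x \<star> y = \<infinity>).\<close>
record 'a pstruct =
  pcarrier :: "'a set"
  pmult :: "'a \<Rightarrow> 'a \<Rightarrow> 'a option"
  pldiv :: "'a \<Rightarrow> 'a \<Rightarrow> 'a option"
  prdiv :: "'a \<Rightarrow> 'a \<Rightarrow> 'a option"
  pjoin :: "'a \<Rightarrow> 'a \<Rightarrow> 'a option"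
  pmeet :: "'a \<Rightarrow> 'a \<Rightarrow> 'a option"
  pneg :: "'a \<Rightarrow> 'a option"
  pone :: 'a
  ptop :: 'a
  pbot :: 'a
  ple :: "'a \<Rightarrow> 'a \<Rightarrow> bool"

definition binop_closed :: "'a set \<Rightarrow> ('a \<Rightarrow> 'a \<Rightarrow> 'a option) \<Rightarrow> bool" where
  "binop_closed B f \<longleftrightarrow> (\<forall>x\<in>B. \<forall>y\<in>B. \<forall>z. f x y = Some z \<longrightarrow> z \<in> B)"

definition pstruct_wf :: "'a pstruct \<Rightarrow> bool" where
  "pstruct_wf P \<longleftrightarrow>
     (let B = pcarrier P in
      pone P \<in> B \<and> ptop P \<in> B \<and> pbot P \<in> B \<and>
      binop_closed B (pmult P) \<and> binop_closed B (pldiv P) \<and> binop_closed B (prdiv P) \<and>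
      binop_closed B (pjoin P) \<and> binop_closed B (pmeet P) \<and>
      (\<forall>x\<in>B. \<forall>z. pneg P x = Some z \<longrightarrow> z \<in> B))"

definition hom_binop :: "'a set \<Rightarrow> ('a \<Rightarrow> 'b) \<Rightarrow> ('a \<Rightarrow> 'a \<Rightarrow> 'a option)
    \<Rightarrow> ('b \<Rightarrow> 'b \<Rightarrow> 'b) \<Rightarrow> bool" where
  "hom_binop B \<iota> f g \<longleftrightarrow> (\<forall>x\<in>B. \<forall>y\<in>B. \<forall>z. f x y = Some z \<longrightarrow> \<iota> z = g (\<iota> x) (\<iota> y))"

definition embedding :: "'a pstruct \<Rightarrow> 'b rba \<Rightarrow> ('a \<Rightarrow> 'b) \<Rightarrow> bool" where
  "embedding P A \<iota> \<longleftrightarrow>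
     inj_on \<iota> (pcarrier P) \<and> \<iota> ` pcarrier P \<subseteq> rcarrier A \<and>
     \<iota> (pone P) = rone A \<and> \<iota> (ptop P) = rtop A \<and> \<iota> (pbot P) = rbot A \<and>
     hom_binop (pcarrier P) \<iota> (pmult P) (rmult A) \<and>
     hom_binop (pcarrier P) \<iota> (pldiv P) (rldiv A) \<and>
     hom_binop (pcarrier P) \<iota> (prdiv P) (rrdiv A) \<and>
     hom_binop (pcarrier P) \<iota> (pjoin P) (rjoin A) \<and>
     hom_binop (pcarrier P) \<iota> (pmeet P) (rmeet A) \<and>
     (\<forall>x\<in>pcarrier P. \<forall>z. pneg P x = Some z \<longrightarrow> \<iota> z = rneg A (\<iota> x)) \<and>
     (\<forall>x\<in>pcarrier P. \<forall>y\<in>pcarrier P. ple P x y \<longleftrightarrow> rle A (\<iota> x) (\<iota> y))"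

text \<open>P is a partial residuated Boolean algebra, witnessed by an embedding \<iota> into the
  residuated Boolean algebra A.  (The existential over A and its carrier type is expressed
  by universally quantifying over A, \<iota> and the type 'b in the hypotheses of theorems.)\<close>
definition partial_rba_via :: "'a pstruct \<Rightarrow> 'b rba \<Rightarrow> ('a \<Rightarrow> 'b) \<Rightarrow> bool" where
  "partial_rba_via P A \<iota> \<longleftrightarrow>
     pstruct_wf P \<and> is_rba A \<and> embedding P A \<iota> \<and>
     (\<forall>a\<in>pcarrier P. pneg P a \<noteq> None \<and>
        pjoin P a (the (pneg P a)) = Some (ptop P) \<and>
        pmeet P a (the (pneg P a)) = Some (pbot P))"

definition prime_filter :: "'a pstruct \<Rightarrow> 'a set \<Rightarrow> bool" where
  "prime_filter P F \<longleftrightarrow>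
     F \<subseteq> pcarrier P \<and> F \<noteq> pcarrier P \<and>
     (\<forall>a\<in>F. \<forall>b\<in>pcarrier P. ple P a b \<longrightarrow> b \<in> F) \<and>
     (\<forall>a\<in>F. \<forall>b\<in>F. \<forall>c. pmeet P a b = Some c \<longrightarrow> c \<in> F) \<and>
     (\<forall>a\<in>pcarrier P. \<forall>c. pneg P a = Some c \<longrightarrow> (c \<in> F \<longleftrightarrow> a \<notin> F))"

end

theory Submission
  imports Defs
begin

lemma rba_facts0:
  assumes "is_rba A"
  shows "rone A \<in> rcarrier A \<and> rtop A \<in> rcarrier A \<and> rbot A \<in> rcarrier A \<and>
    (\<forall>x\<in>rcarrier A. \<forall>y\<in>rcarrier A. rjoin A x y \<in> rcarrier A \<and> rmeet A x y \<in> rcarrier A) \<and>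
    (\<forall>x\<in>rcarrier A. rneg A x \<in> rcarrier A) \<and>
    (\<forall>x\<in>rcarrier A. rle A x x) \<and>
    (\<forall>x\<in>rcarrier A. \<forall>y\<in>rcarrier A. \<forall>z\<in>rcarrier A. rle A x y \<and> rle A y z \<longrightarrow> rle A x z) \<and>
    (\<forall>x\<in>rcarrier A. \<forall>y\<in>rcarrier A. \<forall>z\<in>rcarrier A. rle A (rjoin A x y) z \<longleftrightarrow> rle A x z \<and> rle A y z) \<and>
    (\<forall>x\<in>rcarrier A. \<forall>y\<in>rcarrier A. \<forall>z\<in>rcarrier A. rle A z (rmeet A x y) \<longleftrightarrow> rle A z x \<and> rle A z y) \<and>
    (\<forall>x\<in>rcarrier A. rle A (rbot A) x \<and> rle A x (rtop A)) \<and>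
    (\<forall>x\<in>rcarrier A. \<forall>y\<in>rcarrier A. \<forall>z\<in>rcarrier A. rmeet A x (rjoin A y z) = rjoin A (rmeet A x y) (rmeet A x z)) \<and>
    (\<forall>x\<in>rcarrier A. rjoin A x (rneg A x) = rtop A \<and> rmeet A x (rneg A x) = rbot A)"
  using assms unfolding is_rba_def Let_def
  apply (elim conjE)
  apply (intro conjI)
  apply (assumption | blast)+
  done
lemma rba_facts:
  assumes "is_rba A"
  shows "rone A \<in> rcarrier A" "rtop A \<in> rcarrier A" "rbot A \<in> rcarrier A"
    "\<And>x y. x \<in> rcarrier A \<Longrightarrow> y \<in> rcarrier A \<Longrightarrow> rjoin A x y \<in> rcarrier A"
    "\<And>x y. x \<in> rcarrier A \<Longrightarrow> y \<in> rcarrier A \<Longrightarrow> rmeet A x y \<in> rcarrier A"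
    "\<And>x. x \<in> rcarrier A \<Longrightarrow> rneg A x \<in> rcarrier A"
    "\<And>x. x \<in> rcarrier A \<Longrightarrow> rle A x x"
    "\<And>x y z. x \<in> rcarrier A \<Longrightarrow> y \<in> rcarrier A \<Longrightarrow> z \<in> rcarrier A \<Longrightarrow> rle A x y \<Longrightarrow> rle A y z \<Longrightarrow> rle A x z"
    "\<And>x y z. x \<in> rcarrier A \<Longrightarrow> y \<in> rcarrier A \<Longrightarrow> z \<in> rcarrier A \<Longrightarrow> rle A (rjoin A x y) z \<longleftrightarrow> rle A x z \<and> rle A y z"
    "\<And>x y z. x \<in> rcarrier A \<Longrightarrow> y \<in> rcarrier A \<Longrightarrow> z \<in> rcarrier A \<Longrightarrow> rle A z (rmeet A x y) \<longleftrightarrow> rle A z x \<and> rle A z y"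
    "\<And>x. x \<in> rcarrier A \<Longrightarrow> rle A (rbot A) x \<and> rle A x (rtop A)"
    "\<And>x y z. x \<in> rcarrier A \<Longrightarrow> y \<in> rcarrier A \<Longrightarrow> z \<in> rcarrier A \<Longrightarrow> rmeet A x (rjoin A y z) = rjoin A (rmeet A x y) (rmeet A x z)"
    "\<And>x. x \<in> rcarrier A \<Longrightarrow> rjoin A x (rneg A x) = rtop A \<and> rmeet A x (rneg A x) = rbot A"
  using rba_facts0[OF assms] by blast+


lemma rba_split:
  assumes A: "is_rba A" and m: "m \<in> rcarrier A" and y: "y \<in> rcarrier A"
  shows "rle A m (rjoin A (rmeet A m y) (rmeet A m (rneg A y)))"
proof -
  note f = rba_facts[OF A]
  have ny: "rneg A y \<in> rcarrier A" using f(6) y .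
  have "rle A m (rmeet A m (rtop A))" using f(10)[OF m f(2) m] f(7)[OF m] f(11)[OF m] by blast
  also have "rmeet A m (rtop A) = rjoin A (rmeet A m y) (rmeet A m (rneg A y))"
    using f(12)[OF m y ny] f(13)[OF y] by simp
  finally show ?thesis .
qed

lemma rba_split2:
  assumes A: "is_rba A" and m: "m \<in> rcarrier A" and y: "y \<in> rcarrier A"
   and t: "t \<in> rcarrier A"
   and h1: "rle A (rmeet A m y) t" and h2: "rle A (rmeet A m (rneg A y)) t"
  shows "rle A m t"
proof -
  note f = rba_facts[OF A]
  have ny: "rneg A y \<in> rcarrier A" using f(6) y .
  have j: "rjoin A (rmeet A m y) (rmeet A m (rneg A y)) \<in> rcarrier A"
    using f(4) f(5) m y ny by blast
  have "rle A (rjoin A (rmeet A m y) (rmeet A m (rneg A y))) t"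
    using f(9)[OF f(5)[OF m y] f(5)[OF m ny] t] h1 h2 by blast
  then show ?thesis using f(8)[OF m j t] rba_split[OF A m y] by blast
qed

lemma rba_neg_le:
  assumes A: "is_rba A" and m: "m \<in> rcarrier A" and y: "y \<in> rcarrier A"
   and h: "rle A (rmeet A m y) (rbot A)"
  shows "rle A m (rneg A y)"
proof -
  note f = rba_facts[OF A]
  have ny: "rneg A y \<in> rcarrier A" using f(6) y .
  have "rle A (rmeet A m y) (rneg A y)"
    using f(8)[OF f(5)[OF m y] f(3) ny] h f(11)[OF ny] by blast
  moreover have "rle A (rmeet A m (rneg A y)) (rneg A y)"
    using f(10)[OF m ny f(5)[OF m ny]] f(7)[OF f(5)[OF m ny]] by blast
  ultimately show ?thesis using rba_split2[OF A m y ny] by blast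
qed

lemma rba_pos_le:
  assumes A: "is_rba A" and m: "m \<in> rcarrier A" and y: "y \<in> rcarrier A"
   and h: "rle A (rmeet A m (rneg A y)) (rbot A)"
  shows "rle A m y"
proof -
  note f = rba_facts[OF A]
  have ny: "rneg A y \<in> rcarrier A" using f(6) y .
  have "rle A (rmeet A m (rneg A y)) y"
    using f(8)[OF f(5)[OF m ny] f(3) y] h f(11)[OF y] by blast
  moreover have "rle A (rmeet A m y) y"
    using f(10)[OF m y f(5)[OF m y]] f(7)[OF f(5)[OF m y]] by blast
  ultimately show ?thesis using rba_split2[OF A m y y] by blast
qed

theorem lemma21:
  fixes P :: "'a pstruct" and A :: "'b rba" and \<iota> :: "'a \<Rightarrow> 'b"
  assumes "partial_rba_via P A \<iota>"
    and "a \<in> pcarrier P" and "b \<in> pcarrier P" and "\<not> ple P a b"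
  shows "\<exists>F. prime_filter P F \<and> a \<in> F \<and> b \<notin> F"
proof -
  have A: "is_rba A" and emb: "embedding P A \<iota>" using assms(1) unfolding partial_rba_via_def by auto
  note f = rba_facts[OF A]
  let ?C = "rcarrier A"
  have ic: "\<And>x. x \<in> pcarrier P \<Longrightarrow> \<iota> x \<in> ?C" using emb unfolding embedding_def by blast
  have ile: "\<And>x y. x \<in> pcarrier P \<Longrightarrow> y \<in> pcarrier P \<Longrightarrow> ple P x y \<longleftrightarrow> rle A (\<iota> x) (\<iota> y)"
    using emb unfolding embedding_def by blast
  have imeet: "\<And>x y z. x \<in> pcarrier P \<Longrightarrow> y \<in> pcarrier P \<Longrightarrow> pmeet P x y = Some z \<Longrightarrow> \<iota> z = rmeet A (\<iota> x) (\<iota> y)"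
    using emb unfolding embedding_def hom_binop_def by blast
  have ineg: "\<And>x z. x \<in> pcarrier P \<Longrightarrow> pneg P x = Some z \<Longrightarrow> \<iota> z = rneg A (\<iota> x)"
    using emb unfolding embedding_def by blast
  have wf: "pstruct_wf P" using assms(1) unfolding partial_rba_via_def by auto
  have pmc: "\<And>x y z. x \<in> pcarrier P \<Longrightarrow> y \<in> pcarrier P \<Longrightarrow> pmeet P x y = Some z \<Longrightarrow> z \<in> pcarrier P"
    using wf unfolding pstruct_wf_def binop_closed_def Let_def by blast
  have pnc: "\<And>x z. x \<in> pcarrier P \<Longrightarrow> pneg P x = Some z \<Longrightarrow> z \<in> pcarrier P"
    using wf unfolding pstruct_wf_def Let_def by blast
  define ia where "ia = \<iota> a"
  define ib where "ib = \<iota> b"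
  have ia: "ia \<in> ?C" and ib: "ib \<in> ?C" using ic assms(2,3) ia_def ib_def by auto
  have nib: "rneg A ib \<in> ?C" using f(6) ib .
  define c where "c = rmeet A ia (rneg A ib)"
  have cC: "c \<in> ?C" unfolding c_def using f(5) ia nib by blast
  have cnb: "\<not> rle A c (rbot A)"
    using rba_pos_le[OF A ia ib] assms ile ia_def ib_def c_def by blast
  define S where "S = {G. G \<subseteq> ?C \<and> c \<in> G \<and> (\<forall>x\<in>G. \<forall>y\<in>?C. rle A x y \<longrightarrow> y \<in> G)
      \<and> (\<forall>x\<in>G. \<forall>y\<in>G. rmeet A x y \<in> G) \<and> rbot A \<notin> G}"
  have SI: "G \<in> S" if "G \<subseteq> ?C" "c \<in> G" "\<forall>x\<in>G. \<forall>y\<in>?C. rle A x y \<longrightarrow> y \<in> G"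
      "\<forall>x\<in>G. \<forall>y\<in>G. rmeet A x y \<in> G" "rbot A \<notin> G" for G
    using that unfolding S_def mem_Collect_eq by blast
  have SE: "G \<subseteq> ?C" "c \<in> G" "\<forall>x\<in>G. \<forall>y\<in>?C. rle A x y \<longrightarrow> y \<in> G"
      "\<forall>x\<in>G. \<forall>y\<in>G. rmeet A x y \<in> G" "rbot A \<notin> G" if "G \<in> S" for G
    using that unfolding S_def mem_Collect_eq by blast+
  define U0 where "U0 = {y \<in> ?C. rle A c y}"
  have U0S: "U0 \<in> S"
  proof -
    have "c \<in> U0" using cC f(7)[OF cC] U0_def by simp
    moreover have "\<forall>x\<in>U0. \<forall>y\<in>?C. rle A x y \<longrightarrow> y \<in> U0"
    proof (intro ballI impI)
      fix x y assume x: "x \<in> U0" and y: "y \<in> ?C" and le: "rle A x y"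
      have xC: "x \<in> ?C" and cx: "rle A c x" using x U0_def by auto
      show "y \<in> U0" using f(8)[OF cC xC y cx le] y U0_def by simp
    qed
    moreover have "\<forall>x\<in>U0. \<forall>y\<in>U0. rmeet A x y \<in> U0"
    proof (intro ballI)
      fix x y assume x: "x \<in> U0" and y: "y \<in> U0"
      have xC: "x \<in> ?C" and cx: "rle A c x" using x U0_def by auto
      have yC: "y \<in> ?C" and cy: "rle A c y" using y U0_def by auto
      show "rmeet A x y \<in> U0" using f(10)[OF xC yC cC] cx cy f(5)[OF xC yC] U0_def by simp
    qed
    moreover have "rbot A \<notin> U0" using cnb U0_def by auto
    moreover have "U0 \<subseteq> ?C" unfolding U0_def by blast
    ultimately show ?thesis unfolding S_def mem_Collect_eq by blast
  qed
  have "\<exists>M\<in>S. \<forall>X\<in>S. M \<subseteq> X \<longrightarrow> X = M"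
  proof (rule Zorn_Lemma2, intro ballI)
    fix Ch assume ch: "Ch \<in> chains S"
    show "\<exists>U\<in>S. \<forall>X\<in>Ch. X \<subseteq> U"
    proof (cases "Ch = {}")
      case True then show ?thesis using U0S by blast
    next
      case False
      have sub: "Ch \<subseteq> S" and cc: "\<forall>X\<in>Ch. \<forall>Y\<in>Ch. X \<subseteq> Y \<or> Y \<subseteq> X"
        using ch unfolding chains_def chain_subset_def by blast+
      have "\<Union>Ch \<in> S"
      proof -
        have "\<Union>Ch \<subseteq> ?C" using sub SE(1) by blast
        moreover have "c \<in> \<Union>Ch" using False sub SE(2) by blast
        moreover have "\<forall>x\<in>\<Union>Ch. \<forall>y\<in>?C. rle A x y \<longrightarrow> y \<in> \<Union>Ch"
        proof (intro ballI impI)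
          fix x y assume "x \<in> \<Union>Ch" "y \<in> ?C" "rle A x y"
          then obtain X where X: "X \<in> Ch" "x \<in> X" by blast
          then have "y \<in> X" using SE(3)[of X] sub \<open>y \<in> ?C\<close> \<open>rle A x y\<close> by blast
          then show "y \<in> \<Union>Ch" using X by blast
        qed
        moreover have "\<forall>x\<in>\<Union>Ch. \<forall>y\<in>\<Union>Ch. rmeet A x y \<in> \<Union>Ch"
        proof (intro ballI)
          fix x y assume "x \<in> \<Union>Ch" "y \<in> \<Union>Ch"
          then obtain X Y where XY: "X \<in> Ch" "Y \<in> Ch" "x \<in> X" "y \<in> Y" by blast
          show "rmeet A x y \<in> \<Union>Ch"
          proof (cases "X \<subseteq> Y")
            case True
            then have "rmeet A x y \<in> Y" using SE(4)[of Y] sub XY by blast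
            then show ?thesis using XY by blast
          next
            case False
            then have "Y \<subseteq> X" using cc XY by blast
            then have "rmeet A x y \<in> X" using SE(4)[of X] sub XY by blast
            then show ?thesis using XY by blast
          qed
        qed
        moreover have "rbot A \<notin> \<Union>Ch" using sub SE(5) by blast
        ultimately show ?thesis by (rule SI)
      qed
      then show ?thesis by blast
    qed
  qed
  then obtain M where MS: "M \<in> S" and Mmax: "\<forall>X\<in>S. M \<subseteq> X \<longrightarrow> X = M" by blast
  have MC: "M \<subseteq> ?C" and cM: "c \<in> M" and Mup: "\<forall>x\<in>M. \<forall>y\<in>?C. rle A x y \<longrightarrow> y \<in> M"
    and Mmeet: "\<forall>x\<in>M. \<forall>y\<in>M. rmeet A x y \<in> M" and Mbot: "rbot A \<notin> M"
    using SE[OF MS] by auto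
  have ult: "x \<in> M \<or> rneg A x \<in> M" if x: "x \<in> ?C" for x
  proof (rule ccontr)
    assume nn: "\<not> (x \<in> M \<or> rneg A x \<in> M)"
    define G where "G = {y \<in> ?C. \<exists>m\<in>M. rle A (rmeet A m x) y}"
    have MG: "M \<subseteq> G"
    proof
      fix m assume m: "m \<in> M"
      then have mC: "m \<in> ?C" using MC by blast
      have "rle A (rmeet A m x) m" using f(10)[OF mC x f(5)[OF mC x]] f(7)[OF f(5)[OF mC x]] by blast
      then show "m \<in> G" using m mC G_def by blast
    qed
    have xG: "x \<in> G"
    proof -
      have mC: "c \<in> ?C" using cC .
      have "rle A (rmeet A c x) x" using f(10)[OF mC x f(5)[OF mC x]] f(7)[OF f(5)[OF mC x]] by blast
      then show ?thesis using cM x G_def by blast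
    qed
    have "rbot A \<in> G"
    proof (rule ccontr)
      assume nb: "rbot A \<notin> G"
      have "G \<in> S"
      proof -
        have "G \<subseteq> ?C" using G_def by blast
        moreover have "c \<in> G" using MG cM by blast
        moreover have "\<forall>u\<in>G. \<forall>y\<in>?C. rle A u y \<longrightarrow> y \<in> G"
          unfolding G_def using f(8) f(5) MC x by (smt (verit, best) mem_Collect_eq subsetD)
        moreover have "\<forall>u\<in>G. \<forall>v\<in>G. rmeet A u v \<in> G"
        proof (intro ballI)
          fix u v assume "u \<in> G" "v \<in> G"
          then obtain m1 m2 where u: "u \<in> ?C" and v: "v \<in> ?C" and m1: "m1 \<in> M" and m2: "m2 \<in> M"
            and h1: "rle A (rmeet A m1 x) u" and h2: "rle A (rmeet A m2 x) v"
            unfolding G_def by blast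
          have m1C: "m1 \<in> ?C" and m2C: "m2 \<in> ?C" using m1 m2 MC by auto
          define m where "m = rmeet A m1 m2"
          have mM: "m \<in> M" using Mmeet m1 m2 m_def by blast
          have mC: "m \<in> ?C" using f(5) m1C m2C m_def by blast
          have mx: "rmeet A m x \<in> ?C" using f(5) mC x by blast
          have le1: "rle A m m1" "rle A m m2" using f(10)[OF m1C m2C mC] f(7)[OF mC] m_def by auto
          have "rle A (rmeet A m x) m" "rle A (rmeet A m x) x"
            using f(10)[OF mC x mx] f(7)[OF mx] by auto
          then have "rle A (rmeet A m x) m1" "rle A (rmeet A m x) m2"
            using le1 f(8) mx mC m1C m2C by blast+
          then have "rle A (rmeet A m x) (rmeet A m1 x)" "rle A (rmeet A m x) (rmeet A m2 x)"
            using f(10) mx m1C m2C x \<open>rle A (rmeet A m x) x\<close> by blast+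
          then have "rle A (rmeet A m x) u" "rle A (rmeet A m x) v"
            using f(8) f(5) mx m1C m2C x u v h1 h2 by blast+
          then have "rle A (rmeet A m x) (rmeet A u v)" using f(10) mx u v by blast
          then show "rmeet A u v \<in> G" using G_def mM f(5) u v by blast
        qed
        ultimately show ?thesis using nb by (intro SI)
      qed
      then have "G = M" using Mmax MG by blast
      then show False using xG nn by blast
    qed
    then obtain m where m: "m \<in> M" and h: "rle A (rmeet A m x) (rbot A)" using G_def by blast
    have "rle A m (rneg A x)" using rba_neg_le[OF A _ x h] m MC by blast
    then show False using Mup m f(6)[OF x] nn by blast
  qed
  have notboth: "\<not> (x \<in> M \<and> rneg A x \<in> M)" if x: "x \<in> ?C" for x
    using Mmeet Mbot f(13)[OF x] by metis
  define F where "F = {x \<in> pcarrier P. \<iota> x \<in> M}"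
  have bF: "b \<notin> F"
  proof
    assume "b \<in> F"
    then have "ib \<in> M" using F_def ib_def by blast
    then have bc: "rmeet A ib c \<in> M" using Mmeet cM by blast
    have bcC: "rmeet A ib c \<in> ?C" using f(5) ib cC by blast
    have "rle A (rmeet A ib c) ib" "rle A (rmeet A ib c) c"
      using f(10)[OF ib cC bcC] f(7)[OF bcC] by auto
    moreover have "rle A c (rneg A ib)" using f(10)[OF ia nib cC] f(7)[OF cC] c_def by auto
    ultimately have "rle A (rmeet A ib c) (rneg A ib)" using f(8) bcC cC nib by blast
    then have "rle A (rmeet A ib c) (rmeet A ib (rneg A ib))"
      using f(10)[OF ib nib bcC] \<open>rle A (rmeet A ib c) ib\<close> by blast
    then have "rle A (rmeet A ib c) (rbot A)" using f(13)[OF ib] by simp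
    then show False using Mup bc f(3) Mbot by blast
  qed
  have aF: "a \<in> F"
  proof -
    have "rle A c ia" using f(10)[OF ia nib cC] f(7)[OF cC] c_def by auto
    then show ?thesis using Mup cM ia F_def assms(2) ia_def by blast
  qed
  have "prime_filter P F"
    unfolding prime_filter_def
  proof (intro conjI)
    show "F \<subseteq> pcarrier P" using F_def by blast
    show "F \<noteq> pcarrier P" using bF assms(3) by blast
    show "\<forall>x\<in>F. \<forall>y\<in>pcarrier P. ple P x y \<longrightarrow> y \<in> F"
      using F_def ile ic Mup by blast
    show "\<forall>x\<in>F. \<forall>y\<in>F. \<forall>z. pmeet P x y = Some z \<longrightarrow> z \<in> F"
      using F_def imeet pmc Mmeet by (smt (verit) mem_Collect_eq)
    show "\<forall>x\<in>pcarrier P. \<forall>z. pneg P x = Some z \<longrightarrow> (z \<in> F \<longleftrightarrow> x \<notin> F)"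
      using F_def ineg pnc ult notboth ic by (smt (verit) mem_Collect_eq)
  qed
  then show ?thesis using aF bF by blast
qed

end
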